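(* Assume the setting and the CRAIG recurrence described in the context, and let $\ell$ be the index at which the recurrence stops, i.e. $\beta_2,\dots,\beta_\ell>0$ and $\beta_{\ell+1}=0$ (with $\ell\le n$). Then for every $1\le k\le \ell$, $$\|u_*-u^{(k)}\|_M^2+(p_*-p^{(k)})^TC(p_*-p^{(k)})=\|p_*-p^{(k)}\|_S^2=\sum_{i=k+1}^{\ell}\zeta_i^2,$$ where $\|x\|_S=(x^TSx)^{1/2}$. In particular $\|u_*-u^{(k)}\|_M^2\le\sum_{i=k+1}^{\ell}\zeta_i^2$, and the sequence $\|p_*-p^{(k)}\|_S$, $k=1,\dots,\ell$, is strictly decreasing.
   Context: Setting: $M\in\mathbb{R}^{m\times m}$ is symmetric positive definite, $A\in\mathbb{R}^{m\times n}$ ($n\le m$) has full column rank, $C\in\mathbb{R}^{n\times n}$ is symmetric positive semidefinite, $b\in\mathbb{R}^n$ is nonzero, and $N\in\mathbb{R}^{n\times n}$ is symmetric positive definite (the preconditioner). For a symmetric positive definite $G$ write $\|x\|_G=(x^TGx)^{1/2}$. The generalized saddle point system is $Mu+Ap=0$, $A^Tu-Cp=b$, with unique solution $(u_*,p_* )$; $S=A^TM^{-1}A+C$. CRAIG recurrence (exact arithmetic): Initialization: $\beta_1=\|b\|_{N^{-1}}$, $q_1=N^{-1}b/\beta_1$, $r_1=q_1$, $w_1=M^{-1}Aq_1$, $s_1=Cr_1$, $\alpha_1=(w_1^TMw_1+r_1^Ts_1)^{1/2}$, $v_1=w_1/\alpha_1$, $t_1=s_1/\alpha_1$, $\zeta_1=\beta_1/\alpha_1$,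 $u^{(1)}=\zeta_1v_1$, $p^{(1)}=-(\zeta_1/\alpha_1)r_1$. For $k=1,2,\dots$: $g_k=N^{-1}(A^Tv_k+t_k)-\alpha_kq_k$, $\beta_{k+1}=\|g_k\|_N$; if $\beta_{k+1}=0$ the recurrence stops; otherwise $q_{k+1}=g_k/\beta_{k+1}$, $w_{k+1}=M^{-1}Aq_{k+1}-\beta_{k+1}v_k$, $r_{k+1}=q_{k+1}-(\beta_{k+1}/\alpha_k)r_k$, $s_{k+1}=Cr_{k+1}$, $\alpha_{k+1}=(w_{k+1}^TMw_{k+1}+r_{k+1}^Ts_{k+1})^{1/2}$, $v_{k+1}=w_{k+1}/\alpha_{k+1}$, $t_{k+1}=s_{k+1}/\alpha_{k+1}$, $\zeta_{k+1}=-(\beta_{k+1}/\alpha_{k+1})\zeta_k$, $u^{(k+1)}=u^{(k)}+\zeta_{k+1}v_{k+1}$, $p^{(k+1)}=p^{(k)}-(\zeta_{k+1}/\alpha_{k+1})r_{k+1}$. *)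

theory Defs
  imports "HOL-Analysis.Analysis"
begin

definition qnorm :: "real^'k^'k \<Rightarrow> real^'k \<Rightarrow> real" where
  "qnorm G x = sqrt (x \<bullet> (G *v x))"

definition sym_pos_def_mat :: "real^'k^'k \<Rightarrow> bool" where
  "sym_pos_def_mat G \<longleftrightarrow> transpose G = G \<and> (\<forall>x. x \<noteq> 0 \<longrightarrow> x \<bullet> (G *v x) > 0)"

definition sym_pos_semidef_mat :: "real^'k^'k \<Rightarrow> bool" where
  "sym_pos_semidef_mat G \<longleftrightarrow> transpose G = G \<and> (\<forall>x. x \<bullet> (G *v x) \<ge> 0)"

record ('m, 'n) craig_state =
  cq :: "real^'n"
  cr :: "real^'n"
  cv :: "real^'m"
  ct :: "real^'n"
  calpha :: real
  cbeta :: real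
  czeta :: real
  cu :: "real^'m"
  cp :: "real^'n"

definition craig_init ::
  "real^'m^'m \<Rightarrow> real^'n^'m \<Rightarrow> real^'n^'n \<Rightarrow> real^'n^'n \<Rightarrow> real^'n \<Rightarrow> ('m,'n) craig_state" where
  "craig_init M A C N b =
    (let \<beta> = sqrt (b \<bullet> (matrix_inv N *v b));
         q = (1 / \<beta>) *\<^sub>R (matrix_inv N *v b);
         r = q;
         w = matrix_inv M *v (A *v q);
         s = C *v r;
         \<alpha> = sqrt (w \<bullet> (M *v w) + r \<bullet> s);
         v = (1 / \<alpha>) *\<^sub>R w;
         t = (1 / \<alpha>) *\<^sub>R s;
         \<zeta> = \<beta> / \<alpha>
     in \<lparr> cq = q, cr = r, cv = v, ct = t, calpha = \<alpha>, cbeta = \<beta>, czeta = \<zeta>,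
          cu = \<zeta> *\<^sub>R v, cp = - ((\<zeta> / \<alpha>) *\<^sub>R r) \<rparr>)"

definition craig_step ::
  "real^'m^'m \<Rightarrow> real^'n^'m \<Rightarrow> real^'n^'n \<Rightarrow> real^'n^'n \<Rightarrow> ('m,'n) craig_state \<Rightarrow> ('m,'n) craig_state" where
  "craig_step M A C N st =
    (let g = matrix_inv N *v (transpose A *v cv st + ct st) - calpha st *\<^sub>R cq st;
         \<beta> = sqrt (g \<bullet> (N *v g));
         q = (1 / \<beta>) *\<^sub>R g;
         w = matrix_inv M *v (A *v q) - \<beta> *\<^sub>R cv st;
         r = q - (\<beta> / calpha st) *\<^sub>R cr st;
         s = C *v r;
         \<alpha> = sqrt (w \<bullet> (M *v w) + r \<bullet> s);
         v = (1 / \<alpha>) *\<^sub>R w;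
         t = (1 / \<alpha>) *\<^sub>R s;
         \<zeta> = - (\<beta> / \<alpha>) * czeta st
     in \<lparr> cq = q, cr = r, cv = v, ct = t, calpha = \<alpha>, cbeta = \<beta>, czeta = \<zeta>,
          cu = cu st + \<zeta> *\<^sub>R v, cp = cp st - (\<zeta> / \<alpha>) *\<^sub>R r \<rparr>)"

text \<open>craig_seq ... j is the state with index k = j + 1.\<close>
primrec craig_seq ::
  "real^'m^'m \<Rightarrow> real^'n^'m \<Rightarrow> real^'n^'n \<Rightarrow> real^'n^'n \<Rightarrow> real^'n \<Rightarrow> nat \<Rightarrow> ('m,'n) craig_state" where
  "craig_seq M A C N b 0 = craig_init M A C N b"
| "craig_seq M A C N b (Suc j) = craig_step M A C N (craig_seq M A C N b j)"

definition craig_beta where "craig_beta M A C N b k = cbeta (craig_seq M A C N b (k - 1))"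
definition craig_zeta where "craig_zeta M A C N b k = czeta (craig_seq M A C N b (k - 1))"
definition craig_u where "craig_u M A C N b k = cu (craig_seq M A C N b (k - 1))"
definition craig_p where "craig_p M A C N b k = cp (craig_seq M A C N b (k - 1))"

end

theory Submission
  imports Defs
begin

lemma inner_sym_mat: "transpose G = G \<Longrightarrow> x \<bullet> ((G::real^'k^'k) *v y) = (G *v x) \<bullet> y"
  by (metis dot_lmul_matrix transpose_matrix_vector)

lemma spd_inj: "sym_pos_def_mat (G::real^'k^'k) \<Longrightarrow> inj ((*v) G)"
proof (rule injI)
  fix x y assume sp: "sym_pos_def_mat G" and e: "G *v x = G *v y"
  have "G *v (x - y) = 0" using e by (simp add: matrix_vector_mult_diff_distrib)
  then have "(x - y) \<bullet> (G *v (x - y)) = 0" by simp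
  show "x = y"
  proof (rule ccontr)
    assume "x \<noteq> y"
    then have "x - y \<noteq> 0" by simp
    with sp have "(x - y) \<bullet> (G *v (x - y)) > 0" unfolding sym_pos_def_mat_def by blast
    with \<open>(x - y) \<bullet> (G *v (x - y)) = 0\<close> show False by simp
  qed
qed

lemma spd_inv: assumes "sym_pos_def_mat (G::real^'k^'k)"
  shows "G ** matrix_inv G = mat 1 \<and> matrix_inv G ** G = mat 1"
proof -
  have "invertible G" using spd_inj[OF assms]
    by (simp add: invertible_left_inverse matrix_left_invertible_injective)
  then show ?thesis unfolding invertible_def matrix_inv_def by (rule someI_ex)
qed

lemma spd_inv_vec: assumes "sym_pos_def_mat (G::real^'k^'k)"
  shows "G *v (matrix_inv G *v x) = x" "matrix_inv G *v (G *v x) = x"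
  using spd_inv[OF assms] by (simp_all add: matrix_vector_mul_assoc)

lemma spd_inv_sym: assumes "sym_pos_def_mat (G::real^'k^'k)"
  shows "x \<bullet> (matrix_inv G *v y) = (matrix_inv G *v x) \<bullet> y"
proof -
  have s: "transpose G = G" using assms sym_pos_def_mat_def by blast
  have "x \<bullet> (matrix_inv G *v y) = (G *v (matrix_inv G *v x)) \<bullet> (matrix_inv G *v y)"
    by (simp add: spd_inv_vec[OF assms])
  also have "\<dots> = (matrix_inv G *v x) \<bullet> (G *v (matrix_inv G *v y))"
    by (simp add: inner_sym_mat[OF s])
  also have "\<dots> = (matrix_inv G *v x) \<bullet> y" by (simp add: spd_inv_vec[OF assms])
  finally show ?thesis .
qed

lemma spd_inv_pos: assumes "sym_pos_def_mat (G::real^'k^'k)" "x \<noteq> 0"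
  shows "x \<bullet> (matrix_inv G *v x) > 0"
proof -
  let ?y = "matrix_inv G *v x"
  have "?y \<noteq> 0" using assms spd_inv_vec(1)[OF assms(1), of x] by auto
  then have "?y \<bullet> (G *v ?y) > 0" using assms(1) sym_pos_def_mat_def by blast
  moreover have "?y \<bullet> (G *v ?y) = x \<bullet> ?y" by (simp add: spd_inv_vec[OF assms(1)] inner_commute)
  ultimately show ?thesis by simp
qed

lemma spd_nonneg: "sym_pos_def_mat (G::real^'k^'k) \<Longrightarrow> x \<bullet> (G *v x) \<ge> 0"
  unfolding sym_pos_def_mat_def by (cases "x = 0") (auto intro: less_imp_le)

lemma qnorm_sq: "x \<bullet> (G *v x) \<ge> 0 \<Longrightarrow> (qnorm G x)\<^sup>2 = x \<bullet> (G *v x)"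
  unfolding qnorm_def by simp


locale craigL =
  fixes M :: "real^'m^'m" and A :: "real^'n^'m" and C N :: "real^'n^'n" and b :: "real^'n"
  assumes M_spd: "sym_pos_def_mat M"
    and A_inj: "inj ((*v) A)"
    and C_spsd: "sym_pos_semidef_mat C"
    and b_nz: "b \<noteq> 0"
    and N_spd: "sym_pos_def_mat N"
begin

definition "S = transpose A ** matrix_inv M ** A + C"
definition "st j = craig_seq M A C N b j"
definition "q j = cq (st j)"
definition "r j = cr (st j)"
definition "al j = calpha (st j)"
definition "be j = cbeta (st j)"
definition "ze j = czeta (st j)"
definition "d j = (1 / al j) *\<^sub>R r j"
definition "p j = cp (st j)"
definition "u j = cu (st j)"
definition "g j = matrix_inv N *v (transpose A *v cv (st j) + ct (st j)) - al j *\<^sub>R q j"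

lemma S_vec: "S *v x = transpose A *v (matrix_inv M *v (A *v x)) + C *v x"
  by (simp add: S_def matrix_vector_mult_add_rdistrib matrix_vector_mul_assoc matrix_mul_assoc)

lemma M_sym: "transpose M = M" using M_spd sym_pos_def_mat_def by blast
lemma N_sym: "transpose N = N" using N_spd sym_pos_def_mat_def by blast
lemma C_sym: "transpose C = C" using C_spsd sym_pos_semidef_mat_def by blast

lemma tr_inner: "x \<bullet> (y v* (G::real^'a^'b)) = (G *v x) \<bullet> y"
proof -
  have "(y v* G) \<bullet> x = y \<bullet> (G *v x)" by (rule dot_lmul_matrix)
  then show ?thesis by (simp only: inner_commute[of x "y v* G"] inner_commute[of "G *v x" y])
qed

lemma S_exp: "x \<bullet> (S *v y) = (A *v x) \<bullet> (matrix_inv M *v (A *v y)) + x \<bullet> (C *v y)"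
  by (simp add: S_vec inner_add_right tr_inner)

lemma S_comm: "x \<bullet> (S *v y) = y \<bullet> (S *v x)"
proof -
  have 1: "(A *v x) \<bullet> (matrix_inv M *v (A *v y)) = (A *v y) \<bullet> (matrix_inv M *v (A *v x))"
    by (subst spd_inv_sym[OF M_spd]) (rule inner_commute)
  have 2: "x \<bullet> (C *v y) = y \<bullet> (C *v x)"
    by (subst inner_sym_mat[OF C_sym]) (rule inner_commute)
  show ?thesis by (simp only: S_exp 1 2)
qed

lemma S_sym: "x \<bullet> (S *v y) = (S *v x) \<bullet> y"
  by (subst S_comm) (rule inner_commute)

lemma S_quad: "x \<bullet> (S *v x) = (A *v x) \<bullet> (matrix_inv M *v (A *v x)) + x \<bullet> (C *v x)"
  by (simp add: S_vec inner_add_right tr_inner)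

lemma S_pos: "x \<noteq> 0 \<Longrightarrow> x \<bullet> (S *v x) > 0"
proof -
  assume "x \<noteq> 0"
  then have "A *v x \<noteq> 0" using A_inj by (metis injD matrix_vector_mult_0_right)
  then have "(A *v x) \<bullet> (matrix_inv M *v (A *v x)) > 0" by (rule spd_inv_pos[OF M_spd])
  moreover have "x \<bullet> (C *v x) \<ge> 0" using C_spsd sym_pos_semidef_mat_def by blast
  ultimately show ?thesis by (simp add: S_quad)
qed

lemma S_nonneg: "x \<bullet> (S *v x) \<ge> 0"
  using S_pos[of x] by (cases "x = 0") auto

lemma N_symi: "x \<bullet> (N *v y) = (N *v x) \<bullet> y" by (rule inner_sym_mat[OF N_sym])
lemma N_comm: "x \<bullet> (N *v y) = y \<bullet> (N *v x)"
  by (subst N_symi) (rule inner_commute)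

lemma N_nonneg: "x \<bullet> (N *v x) \<ge> 0" by (rule spd_nonneg[OF N_spd])

lemma N_zero: "x \<bullet> (N *v x) = 0 \<Longrightarrow> x = 0"
proof (rule ccontr)
  assume "x \<bullet> (N *v x) = 0" "x \<noteq> 0"
  then show False using N_spd unfolding sym_pos_def_mat_def by auto
qed

lemma st_Suc: "st (Suc j) = craig_step M A C N (st j)"
  by (simp add: st_def)

lemma rec_q: "q (Suc j) = (1 / be (Suc j)) *\<^sub>R g j"
  by (simp add: q_def be_def g_def st_Suc craig_step_def Let_def al_def)
lemma rec_be: "be (Suc j) = sqrt (g j \<bullet> (N *v g j))"
  by (simp add: q_def be_def g_def st_Suc craig_step_def Let_def al_def)
lemma rec_r: "r (Suc j) = q (Suc j) - be (Suc j) *\<^sub>R d j"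
  by (simp add: q_def be_def g_def st_Suc craig_step_def Let_def al_def r_def d_def)
lemma rec_ze: "ze (Suc j) = - (be (Suc j) / al (Suc j)) * ze j"
  by (simp add: ze_def be_def al_def st_Suc craig_step_def Let_def)
lemma rec_p: "p (Suc j) = p j - ze (Suc j) *\<^sub>R d (Suc j)"
  by (simp add: ze_def al_def st_Suc craig_step_def Let_def p_def d_def r_def)

lemma init_st: "st 0 = craig_init M A C N b" by (simp add: st_def)
lemma init_q: "q 0 = (1 / be 0) *\<^sub>R (matrix_inv N *v b)"
  by (simp add: q_def be_def init_st craig_init_def Let_def)
lemma init_be: "be 0 = sqrt (b \<bullet> (matrix_inv N *v b))"
  by (simp add: be_def init_st craig_init_def Let_def)
lemma init_r: "r 0 = q 0"
  by (simp add: q_def r_def init_st craig_init_def Let_def)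
lemma init_ze: "ze 0 = be 0 / al 0"
  by (simp add: ze_def be_def al_def init_st craig_init_def Let_def)
lemma init_p: "p 0 = - (ze 0 *\<^sub>R d 0)"
  by (simp add: ze_def al_def init_st craig_init_def Let_def p_def d_def r_def)

lemma rec_v: "cv (st (Suc j)) = (1 / al (Suc j)) *\<^sub>R (matrix_inv M *v (A *v q (Suc j)) - be (Suc j) *\<^sub>R cv (st j))"
  by (simp add: q_def be_def g_def st_Suc craig_step_def Let_def al_def)
lemma rec_t: "ct (st (Suc j)) = (1 / al (Suc j)) *\<^sub>R (C *v r (Suc j))"
  by (simp add: r_def al_def st_Suc craig_step_def Let_def)

lemma vt: "cv (st j) = matrix_inv M *v (A *v d j) \<and> ct (st j) = C *v d j"
proof (induction j)
  case 0
  show ?case by (simp add: init_st craig_init_def Let_def d_def r_def al_def algebra_simps)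
next
  case (Suc j)
  then have "cv (st j) = matrix_inv M *v (A *v d j)" by simp
  then show ?case
    by (simp add: rec_v rec_t d_def[of "Suc j"] rec_r algebra_simps)
qed

lemma g_eq: "g j = matrix_inv N *v (S *v d j) - al j *\<^sub>R q j"
  by (simp add: g_def vt S_vec)

lemma al_raw: "al j = sqrt ((matrix_inv M *v (A *v r j)) \<bullet> (M *v (matrix_inv M *v (A *v r j))) + r j \<bullet> (C *v r j))"
proof (cases j)
  case 0
  then show ?thesis by (simp add: al_def r_def init_st craig_init_def Let_def)
next
  case (Suc i)
  have w_eq: "matrix_inv M *v (A *v q (Suc i)) - be (Suc i) *\<^sub>R cv (st i) = matrix_inv M *v (A *v r (Suc i))"
    by (simp add: rec_r vt algebra_simps)
  have "al (Suc i) = sqrt ((matrix_inv M *v (A *v q (Suc i)) - be (Suc i) *\<^sub>R cv (st i)) \<bullet>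
      (M *v (matrix_inv M *v (A *v q (Suc i)) - be (Suc i) *\<^sub>R cv (st i))) + r (Suc i) \<bullet> (C *v r (Suc i)))"
    unfolding al_def q_def be_def r_def st_Suc craig_step_def Let_def by simp
  then show ?thesis using Suc by (simp only: w_eq)
qed

lemma al_eq: "al j = sqrt (r j \<bullet> (S *v r j))"
  by (simp add: al_raw spd_inv_vec[OF M_spd] S_quad inner_commute)

lemma al_nonneg: "al j \<ge> 0" by (simp add: al_eq S_nonneg)

lemma al_sq: "(al j)\<^sup>2 = r j \<bullet> (S *v r j)" by (simp add: al_eq S_nonneg)

lemma r_eq: "al j \<noteq> 0 \<Longrightarrow> r j = al j *\<^sub>R d j" by (simp add: d_def)

lemma d_norm: "al j > 0 \<Longrightarrow> d j \<bullet> (S *v d j) = 1"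
proof -
  assume a: "al j > 0"
  have h: "r j \<bullet> (S *v r j) = al j * al j" using al_sq[of j] by (simp add: power2_eq_square)
  show ?thesis using a by (simp add: d_def algebra_simps h)
qed

lemma g_be: "g j = be (Suc j) *\<^sub>R q (Suc j)"
proof (cases "be (Suc j) = 0")
  case True
  then have "g j \<bullet> (N *v g j) = 0" using rec_be[of j] N_nonneg[of "g j"] by simp
  then show ?thesis using N_zero True by simp
next
  case False
  then show ?thesis by (simp add: rec_q)
qed

lemma q_norm: "be (Suc j) > 0 \<Longrightarrow> q (Suc j) \<bullet> (N *v q (Suc j)) = 1"
proof -
  assume a: "be (Suc j) > 0"
  have "(be (Suc j))\<^sup>2 = g j \<bullet> (N *v g j)" using rec_be[of j] N_nonneg[of "g j"] by simp
  then have h: "g j \<bullet> (N *v g j) = be (Suc j) * be (Suc j)" by (simp add: power2_eq_square)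
  show ?thesis using a by (simp add: rec_q algebra_simps h)
qed

lemma K: "S *v d j = N *v (be (Suc j) *\<^sub>R q (Suc j) + al j *\<^sub>R q j)"
proof -
  have "matrix_inv N *v (S *v d j) = be (Suc j) *\<^sub>R q (Suc j) + al j *\<^sub>R q j"
    using g_eq[of j] g_be[of j] by (simp add: algebra_simps)
  then show ?thesis by (metis spd_inv_vec(1)[OF N_spd])
qed

lemma d_Suc: "d (Suc j) = (1 / al (Suc j)) *\<^sub>R (q (Suc j) - be (Suc j) *\<^sub>R d j)"
  by (simp add: d_def[of "Suc j"] rec_r)
lemma d_0: "d 0 = (1 / al 0) *\<^sub>R q 0"
  by (simp add: d_def init_r)
lemma q_Suc: "al (Suc j) \<noteq> 0 \<Longrightarrow> q (Suc j) = al (Suc j) *\<^sub>R d (Suc j) + be (Suc j) *\<^sub>R d j"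
  by (simp add: d_Suc)
lemma q_0: "al 0 \<noteq> 0 \<Longrightarrow> q 0 = al 0 *\<^sub>R d 0"
  by (simp add: d_0)

lemma be0_pos: "be 0 > 0"
  by (simp add: init_be spd_inv_pos[OF N_spd b_nz])

lemma q0_norm: "q 0 \<bullet> (N *v q 0) = 1"
proof -
  have "(matrix_inv N *v b) \<bullet> (N *v (matrix_inv N *v b)) = (be 0)\<^sup>2"
    using spd_inv_pos[OF N_spd b_nz] by (simp add: init_be spd_inv_vec[OF N_spd] inner_commute)
  then show ?thesis using be0_pos by (simp add: init_q algebra_simps power2_eq_square)
qed

lemma mv_neg: "(G::real^'a^'b) *v (- x) = - (G *v x)"
  using matrix_vector_mult_diff_distrib[of G 0 x] by simp
lemma vm_neg: "(- x) v* (G::real^'a^'b) = - (x v* G)"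
  using vector_matrix_mult_diff_distrib[of 0 x G] by simp

lemmas lin = mv_neg vm_neg matrix_vector_right_distrib matrix_vector_mult_diff_distrib matrix_vector_mult_scaleR
  inner_add_left inner_add_right inner_diff_left inner_diff_right inner_scaleR_left inner_scaleR_right

lemma iN_N: "(matrix_inv N *v z) \<bullet> (N *v y) = z \<bullet> y"
  using N_symi[of "matrix_inv N *v z" y] by (simp add: spd_inv_vec[OF N_spd])

definition "Pq j \<longleftrightarrow> (\<forall>i\<le>j. \<forall>i'\<le>j. q i \<bullet> (N *v q i') = (if i = i' then 1 else 0))"
definition "Pd j \<longleftrightarrow> (\<forall>i\<le>j. \<forall>i'\<le>j. d i \<bullet> (S *v d i') = (if i = i' then 1 else 0))"
definition "Pc j \<longleftrightarrow> (\<forall>i i'. i < i' \<longrightarrow> i' \<le> j \<longrightarrow> d i \<bullet> (N *v q i') = 0)"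
definition "Pa j \<longleftrightarrow> (\<forall>i\<le>j. al i > 0)"

lemma L_dSq:
  assumes "Pd j" "Pa j" "i \<le> j" "k \<le> j"
  shows "d k \<bullet> (S *v q i) = (if k = i then al i else if Suc k = i then be i else 0)"
proof (cases i)
  case 0
  have "al 0 > 0" using assms(2) unfolding Pa_def by auto
  then have "q 0 = al 0 *\<^sub>R d 0" by (simp add: q_0)
  moreover have "d k \<bullet> (S *v d 0) = (if k = 0 then 1 else 0)" using assms(1,4) unfolding Pd_def by auto
  ultimately show ?thesis using 0 by (simp add: lin)
next
  case (Suc i0)
  have "al i > 0" using assms(2,3) unfolding Pa_def by auto
  then have "q i = al i *\<^sub>R d i + be i *\<^sub>R d i0" using Suc by (simp add: q_Suc)
  moreover have "d k \<bullet> (S *v d i) = (if k = i then 1 else 0)" using assms(1,3,4) unfolding Pd_def by auto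
  moreover have "d k \<bullet> (S *v d i0) = (if k = i0 then 1 else 0)" using assms(1,3,4) Suc unfolding Pd_def by auto
  ultimately show ?thesis using Suc by (auto simp add: lin)
qed

lemma L_a1:
  assumes "Pq j" "Pd j" "Pa j" "be (Suc j) > 0" "i \<le> j"
  shows "q (Suc j) \<bullet> (N *v q i) = 0"
proof -
  have "be (Suc j) * (q (Suc j) \<bullet> (N *v q i)) = g j \<bullet> (N *v q i)"
    by (simp add: g_be lin)
  also have "\<dots> = (S *v d j) \<bullet> q i - al j * (q j \<bullet> (N *v q i))"
    by (simp add: g_eq lin iN_N)
  also have "(S *v d j) \<bullet> q i = d j \<bullet> (S *v q i)" by (simp add: S_sym)
  also have "\<dots> = (if j = i then al i else 0)" using L_dSq[OF assms(2,3,5), of j] assms(5) by simp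
  also have "q j \<bullet> (N *v q i) = (if j = i then 1 else 0)" using assms(1,5) unfolding Pq_def by auto
  finally have "be (Suc j) * (q (Suc j) \<bullet> (N *v q i)) = 0" by simp
  then show ?thesis using assms(4) by simp
qed

lemma L_Pq:
  assumes "Pq j" "Pd j" "Pa j" "be (Suc j) > 0"
  shows "Pq (Suc j)"
  unfolding Pq_def
proof (intro allI impI)
  fix i i' assume i: "i \<le> Suc j" and i': "i' \<le> Suc j"
  show "q i \<bullet> (N *v q i') = (if i = i' then 1 else 0)"
  proof (cases "i = Suc j")
    case True
    show ?thesis
    proof (cases "i' = Suc j")
      case True
      then show ?thesis using \<open>i = Suc j\<close> q_norm[OF assms(4)] by simp
    next
      case False
      then show ?thesis using \<open>i = Suc j\<close> L_a1[OF assms, of i'] i' by simp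
    qed
  next
    case False
    show ?thesis
    proof (cases "i' = Suc j")
      case True
      then show ?thesis using False L_a1[OF assms, of i] i by (simp add: N_comm[of "q i"])
    next
      case False
      then show ?thesis using \<open>i \<noteq> Suc j\<close> assms(1) i i' unfolding Pq_def by auto
    qed
  qed
qed

lemma L_c1:
  assumes "Pq (Suc j)" "Pa j"
  shows "i \<le> j \<Longrightarrow> d i \<bullet> (N *v q (Suc j)) = 0"
proof (induction i)
  case 0
  have "q 0 \<bullet> (N *v q (Suc j)) = 0" using assms(1) unfolding Pq_def by auto
  then show ?case by (simp add: d_0 lin)
next
  case (Suc i)
  have "q (Suc i) \<bullet> (N *v q (Suc j)) = 0" using assms(1) Suc.prems unfolding Pq_def by auto
  then show ?case using Suc by (simp add: d_Suc lin)
qed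

lemma L_Pc:
  assumes "Pc j" "Pq (Suc j)" "Pa j"
  shows "Pc (Suc j)"
  unfolding Pc_def
proof (intro allI impI)
  fix i i' assume "i < i'" "i' \<le> Suc j"
  then show "d i \<bullet> (N *v q i') = 0"
    using assms(1) L_c1[OF assms(2,3), of i] unfolding Pc_def
    by (cases "i' = Suc j") auto
qed

lemma L_al:
  assumes "Pq (Suc j)" "Pc (Suc j)" "be (Suc j) > 0"
  shows "al (Suc j) > 0"
proof -
  have "r (Suc j) \<bullet> (N *v q (Suc j)) = q (Suc j) \<bullet> (N *v q (Suc j)) - be (Suc j) * (d j \<bullet> (N *v q (Suc j)))"
    by (simp add: rec_r lin)
  also have "\<dots> = 1" using assms(1,2) unfolding Pq_def Pc_def by auto
  finally have "r (Suc j) \<noteq> 0" by auto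
  then have "r (Suc j) \<bullet> (S *v r (Suc j)) > 0" by (rule S_pos)
  then show ?thesis by (simp add: al_eq)
qed

lemma L_Pd:
  assumes "Pd j" "Pq (Suc j)" "Pa (Suc j)"
  shows "Pd (Suc j)"
proof -
  have pa: "Pa j" using assms(3) unfolding Pa_def by auto
  have new: "d (Suc j) \<bullet> (S *v d i) = 0" if i: "i \<le> j" for i
  proof -
    have "q (Suc j) \<bullet> (S *v d i) = (be (Suc i) *\<^sub>R q (Suc i) + al i *\<^sub>R q i) \<bullet> (N *v q (Suc j))"
      by (simp add: K N_symi[symmetric] inner_commute)
    also have "\<dots> = be (Suc i) * (q (Suc i) \<bullet> (N *v q (Suc j))) + al i * (q i \<bullet> (N *v q (Suc j)))"
      by (simp add: lin)
    also have "\<dots> = (if i = j then be (Suc j) else 0)"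
      using assms(2) i unfolding Pq_def by auto
    finally have 1: "q (Suc j) \<bullet> (S *v d i) = (if i = j then be (Suc j) else 0)" .
    have 2: "d j \<bullet> (S *v d i) = (if i = j then 1 else 0)" using assms(1) i unfolding Pd_def by auto
    show ?thesis by (simp add: d_Suc lin 1 2)
  qed
  have al: "al (Suc j) > 0" using assms(3) unfolding Pa_def by auto
  show ?thesis
    unfolding Pd_def
  proof (intro allI impI)
    fix i i' assume i: "i \<le> Suc j" and i': "i' \<le> Suc j"
    show "d i \<bullet> (S *v d i') = (if i = i' then 1 else 0)"
    proof (cases "i = Suc j")
      case True
      show ?thesis
      proof (cases "i' = Suc j")
        case True
        then show ?thesis using \<open>i = Suc j\<close> d_norm[OF al] by simp
      next
        case False
        then show ?thesis using \<open>i = Suc j\<close> new[of i'] i' by simp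
      qed
    next
      case False
      show ?thesis
      proof (cases "i' = Suc j")
        case True
        then show ?thesis using False new[of i] i by (simp add: S_comm[of "d i"])
      next
        case False
        then show ?thesis using \<open>i \<noteq> Suc j\<close> assms(1) i i' unfolding Pd_def by auto
      qed
    qed
  qed
qed

lemma L_base: "Pq 0 \<and> Pd 0 \<and> Pc 0 \<and> Pa 0"
proof -
  have pq: "Pq 0" unfolding Pq_def using q0_norm by auto
  have "q 0 \<noteq> 0" using q0_norm by auto
  then have "r 0 \<bullet> (S *v r 0) > 0" by (simp add: init_r S_pos)
  then have a: "al 0 > 0" by (simp add: al_eq)
  then have "Pa 0" unfolding Pa_def by auto
  moreover have "Pd 0" unfolding Pd_def using d_norm[OF a] by auto
  moreover have "Pc 0" unfolding Pc_def by auto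
  ultimately show ?thesis using pq by simp
qed

lemma L_all:
  assumes bp: "\<And>j. j \<le> L \<Longrightarrow> be j > 0"
  shows "j \<le> L \<Longrightarrow> Pq j \<and> Pd j \<and> Pc j \<and> Pa j"
proof (induction j)
  case 0
  show ?case using L_base by blast
next
  case (Suc j)
  then have IH: "Pq j" "Pd j" "Pc j" "Pa j" by auto
  have b: "be (Suc j) > 0" using bp Suc.prems by blast
  have pq: "Pq (Suc j)" by (rule L_Pq[OF IH(1,2,4) b])
  have pc: "Pc (Suc j)" by (rule L_Pc[OF IH(3) pq IH(4)])
  have "al (Suc j) > 0" by (rule L_al[OF pq pc b])
  then have pa: "Pa (Suc j)" using IH(4) unfolding Pa_def by (auto simp: le_Suc_eq)
  have pd: "Pd (Suc j)" by (rule L_Pd[OF IH(2) pq pa])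
  show ?case using pq pc pa pd by simp
qed

lemma rec_u: "u (Suc j) = u j + ze (Suc j) *\<^sub>R cv (st (Suc j))"
  by (simp add: u_def ze_def st_Suc craig_step_def Let_def)
lemma init_u: "u 0 = ze 0 *\<^sub>R cv (st 0)"
  by (simp add: u_def ze_def init_st craig_init_def Let_def)

lemma u_eq: "u j = - (matrix_inv M *v (A *v p j))"
proof (induction j)
  case 0
  then show ?case by (simp add: init_u init_p vt lin)
next
  case (Suc j)
  then show ?case by (simp add: rec_u rec_p vt lin)
qed

end

locale craigE = craigL +
  fixes us ps L
  assumes sol1: "M *v us + A *v ps = 0"
    and sol2: "transpose A *v us - C *v ps = b"
    and bp: "\<And>j. j \<le> L \<Longrightarrow> be j > 0"
    and bs: "be (Suc L) = 0"
begin

lemma us_eq: "us = - (matrix_inv M *v (A *v ps))"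
proof -
  have "M *v us = - (A *v ps)" using sol1 by (simp add: eq_neg_iff_add_eq_0)
  then have "matrix_inv M *v (M *v us) = - (matrix_inv M *v (A *v ps))"
    by (simp add: mv_neg)
  then show ?thesis by (simp add: spd_inv_vec[OF M_spd])
qed

lemma Sps: "S *v ps = - b"
proof -
  have h0: "- ((matrix_inv M *v (A *v ps)) v* A) = b + C *v ps"
    using sol2 by (simp add: us_eq vm_neg diff_eq_eq)
  have h: "(matrix_inv M *v (A *v ps)) v* A = - (b + C *v ps)"
    by (simp only: h0[symmetric] minus_minus)
  show ?thesis by (simp add: S_vec h)
qed

lemma allP: "j \<le> L \<Longrightarrow> Pq j \<and> Pd j \<and> Pc j \<and> Pa j"
  using L_all[OF bp] by blast

lemma alpos: "j \<le> L \<Longrightarrow> al j > 0"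
  using allP[of j] unfolding Pa_def by auto

lemma Se: "j \<le> L \<Longrightarrow> S *v (ps - p j) = (ze j * be (Suc j)) *\<^sub>R (N *v q (Suc j))"
proof (induction j)
  case 0
  have a: "al 0 > 0" using alpos by simp
  have z: "ze 0 * al 0 = be 0" using a by (simp add: init_ze)
  have bq: "N *v (be 0 *\<^sub>R q 0) = b" using be0_pos by (simp add: init_q lin spd_inv_vec[OF N_spd])
  have "S *v (ps - p 0) = - b + ze 0 *\<^sub>R (S *v d 0)" by (simp add: init_p Sps lin)
  also have "\<dots> = - b + (ze 0 * be (Suc 0)) *\<^sub>R (N *v q (Suc 0)) + N *v ((ze 0 * al 0) *\<^sub>R q 0)"
    by (simp add: K lin scaleR_add_right)
  also have "\<dots> = (ze 0 * be (Suc 0)) *\<^sub>R (N *v q (Suc 0))" by (simp only: z bq) simp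
  finally show ?case .
next
  case (Suc j)
  have a: "al (Suc j) > 0" using alpos Suc.prems by simp
  have z: "ze (Suc j) * al (Suc j) = - (be (Suc j) * ze j)" using a by (simp add: rec_ze)
  have "S *v (ps - p (Suc j)) = S *v (ps - p j) + ze (Suc j) *\<^sub>R (S *v d (Suc j))"
    by (simp add: rec_p lin algebra_simps)
  also have "\<dots> = (ze j * be (Suc j)) *\<^sub>R (N *v q (Suc j)) + (ze (Suc j) * be (Suc (Suc j))) *\<^sub>R (N *v q (Suc (Suc j)))
       + (ze (Suc j) * al (Suc j)) *\<^sub>R (N *v q (Suc j))"
    using Suc by (simp add: K lin scaleR_add_right)
  also have "\<dots> = (ze (Suc j) * be (Suc (Suc j))) *\<^sub>R (N *v q (Suc (Suc j)))"
    by (simp only: z) (simp add: algebra_simps)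
  finally show ?case .
qed

lemma eL: "ps - p L = 0"
proof (rule ccontr)
  assume "ps - p L \<noteq> 0"
  then have "(ps - p L) \<bullet> (S *v (ps - p L)) > 0" by (rule S_pos)
  moreover have "S *v (ps - p L) = 0" using Se[of L] bs by simp
  ultimately show False by simp
qed

lemma orth_e: "Suc j \<le> L \<Longrightarrow> d (Suc j) \<bullet> (S *v (ps - p (Suc j))) = 0"
proof -
  assume j: "Suc j \<le> L"
  show ?thesis
  proof (cases "Suc (Suc j) \<le> L")
    case True
    then have "d (Suc j) \<bullet> (N *v q (Suc (Suc j))) = 0" using allP[of "Suc (Suc j)"] unfolding Pc_def by auto
    then show ?thesis using Se[OF j] by (simp add: lin)
  next
    case False
    then have "Suc j = L" using j by simp
    then show ?thesis using Se[OF j] bs by simp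
  qed
qed

lemma e_step: "Suc j \<le> L \<Longrightarrow>
  (ps - p j) \<bullet> (S *v (ps - p j)) = (ps - p (Suc j)) \<bullet> (S *v (ps - p (Suc j))) + (ze (Suc j))\<^sup>2"
proof -
  assume j: "Suc j \<le> L"
  define e where "e = ps - p (Suc j)"
  have ej: "ps - p j = e - ze (Suc j) *\<^sub>R d (Suc j)" by (simp add: e_def rec_p)
  have o: "d (Suc j) \<bullet> (S *v e) = 0" using orth_e[OF j] by (simp add: e_def)
  have o2: "e \<bullet> (S *v d (Suc j)) = 0" using o by (simp add: S_comm[of e])
  have n: "d (Suc j) \<bullet> (S *v d (Suc j)) = 1" using d_norm alpos[OF j] by simp
  show ?thesis unfolding ej e_def[symmetric]
    by (simp add: lin o o2 n power2_eq_square)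
qed

lemma ze_nz: "j \<le> L \<Longrightarrow> ze j \<noteq> 0"
proof (induction j)
  case 0
  then show ?case using be0_pos alpos[of 0] by (simp add: init_ze)
next
  case (Suc j)
  then show ?case using bp[of "Suc j"] alpos[of "Suc j"] by (simp add: rec_ze)
qed

lemma e_sum: "j \<le> L \<Longrightarrow> (ps - p j) \<bullet> (S *v (ps - p j)) = (\<Sum>i = j + 2..L + 1. (ze (i - 1))\<^sup>2)"
proof (induction "L - j" arbitrary: j)
  case 0
  then have "j = L" by simp
  then show ?case using eL by simp
next
  case (Suc k)
  then have j: "Suc j \<le> L" by simp
  have IH: "(ps - p (Suc j)) \<bullet> (S *v (ps - p (Suc j))) = (\<Sum>i = Suc j + 2..L + 1. (ze (i - 1))\<^sup>2)"
    using Suc.hyps(1)[of "Suc j"] Suc.hyps(2) j by simp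
  have "(\<Sum>i = j + 2..L + 1. (ze (i - 1))\<^sup>2) = (ze (Suc j))\<^sup>2 + (\<Sum>i = Suc (j + 2)..L + 1. (ze (i - 1))\<^sup>2)"
    using j by (subst sum.atLeast_Suc_atMost) simp_all
  then show ?case using e_step[OF j] IH by simp
qed

end

theorem mainTheorem5:
  fixes M :: "real^'m^'m" and A :: "real^'n^'m" and C N :: "real^'n^'n"
    and b :: "real^'n" and us :: "real^'m" and ps :: "real^'n" and l :: nat
  assumes M_spd: "sym_pos_def_mat M"
    and A_rank: "rank A = CARD('n)"
    and C_spsd: "sym_pos_semidef_mat C"
    and b_nz: "b \<noteq> 0"
    and N_spd: "sym_pos_def_mat N"
    and sol1: "M *v us + A *v ps = 0"
    and sol2: "transpose A *v us - C *v ps = b"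
    and l_pos: "1 \<le> l"
    and beta_pos: "\<forall>k. 2 \<le> k \<and> k \<le> l \<longrightarrow> craig_beta M A C N b k > 0"
    and beta_stop: "craig_beta M A C N b (l + 1) = 0"
  shows "(\<forall>k. 1 \<le> k \<and> k \<le> l \<longrightarrow>
            (let S = transpose A ** matrix_inv M ** A + C;
                 eu = us - craig_u M A C N b k;
                 ep = ps - craig_p M A C N b k
             in (qnorm M eu)\<^sup>2 + ep \<bullet> (C *v ep) = (qnorm S ep)\<^sup>2
              \<and> (qnorm S ep)\<^sup>2 = (\<Sum>i = k + 1..l. (craig_zeta M A C N b i)\<^sup>2)
              \<and> (qnorm M eu)\<^sup>2 \<le> (\<Sum>i = k + 1..l. (craig_zeta M A C N b i)\<^sup>2)))
       \<and> (\<forall>k. 1 \<le> k \<and> k < l \<longrightarrow>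
            qnorm (transpose A ** matrix_inv M ** A + C) (ps - craig_p M A C N b (k + 1))
          < qnorm (transpose A ** matrix_inv M ** A + C) (ps - craig_p M A C N b k))"
proof -
  have A_inj: "inj ((*v) A)" using A_rank full_rank_injective by blast
  interpret L: craigL M A C N b
    by unfold_locales (fact M_spd A_inj C_spsd b_nz N_spd)+
  have bp: "L.be j > 0" if j: "j \<le> l - 1" for j
  proof (cases j)
    case 0
    then show ?thesis using L.be0_pos by simp
  next
    case (Suc i)
    then have "craig_beta M A C N b (j + 1) > 0" using beta_pos j l_pos by auto
    then show ?thesis by (simp add: craig_beta_def L.be_def L.st_def)
  qed
  have bs: "L.be (Suc (l - 1)) = 0"
    using beta_stop l_pos by (simp add: craig_beta_def L.be_def L.st_def)
  interpret E: craigE M A C N b us ps "l - 1"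
    by unfold_locales (fact sol1 sol2 bp bs)+
  have cu: "craig_u M A C N b k = L.u (k - 1)" for k by (simp add: craig_u_def L.u_def L.st_def)
  have cp: "craig_p M A C N b k = L.p (k - 1)" for k by (simp add: craig_p_def L.p_def L.st_def)
  have cz: "craig_zeta M A C N b k = L.ze (k - 1)" for k by (simp add: craig_zeta_def L.ze_def L.st_def)
  have SS: "transpose A ** matrix_inv M ** A + C = L.S" by (simp add: L.S_def)
  have part1: "(qnorm M (us - L.u j))\<^sup>2 + (ps - L.p j) \<bullet> (C *v (ps - L.p j)) = (qnorm L.S (ps - L.p j))\<^sup>2
      \<and> (qnorm L.S (ps - L.p j))\<^sup>2 = (\<Sum>i = j + 2..l. (L.ze (i - 1))\<^sup>2)
      \<and> (qnorm M (us - L.u j))\<^sup>2 \<le> (\<Sum>i = j + 2..l. (L.ze (i - 1))\<^sup>2)" if j: "j \<le> l - 1" for j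
  proof -
    define ep where "ep = ps - L.p j"
    define y where "y = matrix_inv M *v (A *v ep)"
    have eu: "us - L.u j = - y"
      by (simp add: y_def ep_def E.us_eq L.u_eq L.lin algebra_simps)
    have q1: "(qnorm M (us - L.u j))\<^sup>2 = (A *v ep) \<bullet> (matrix_inv M *v (A *v ep))"
    proof -
      have "(qnorm M (us - L.u j))\<^sup>2 = (us - L.u j) \<bullet> (M *v (us - L.u j))"
        by (rule qnorm_sq[OF spd_nonneg[OF M_spd]])
      also have "\<dots> = y \<bullet> (M *v y)" by (simp add: eu L.lin)
      also have "\<dots> = y \<bullet> (A *v ep)" by (simp add: y_def spd_inv_vec[OF M_spd])
      finally show ?thesis by (simp add: y_def inner_commute)
    qed
    have q2: "(qnorm L.S ep)\<^sup>2 = ep \<bullet> (L.S *v ep)" by (rule qnorm_sq[OF L.S_nonneg])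
    have s: "ep \<bullet> (L.S *v ep) = (\<Sum>i = j + 2..l. (L.ze (i - 1))\<^sup>2)"
      using E.e_sum[OF j] l_pos by (simp add: ep_def)
    have c: "ep \<bullet> (C *v ep) \<ge> 0" using C_spsd sym_pos_semidef_mat_def by blast
    show ?thesis unfolding ep_def[symmetric] using q1 q2 s c by (simp add: L.S_quad)
  qed
  show ?thesis
  proof (intro conjI allI impI)
    fix k assume k: "1 \<le> k \<and> k \<le> l"
    have j: "k - 1 \<le> l - 1" using k by arith
    have sum: "(\<Sum>i = k + 1..l. (craig_zeta M A C N b i)\<^sup>2) = (\<Sum>i = (k - 1) + 2..l. (L.ze (i - 1))\<^sup>2)"
      using k by (simp add: cz)
    show "let S = transpose A ** matrix_inv M ** A + C;
                 eu = us - craig_u M A C N b k;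
                 ep = ps - craig_p M A C N b k
             in (qnorm M eu)\<^sup>2 + ep \<bullet> (C *v ep) = (qnorm S ep)\<^sup>2
              \<and> (qnorm S ep)\<^sup>2 = (\<Sum>i = k + 1..l. (craig_zeta M A C N b i)\<^sup>2)
              \<and> (qnorm M eu)\<^sup>2 \<le> (\<Sum>i = k + 1..l. (craig_zeta M A C N b i)\<^sup>2)"
      unfolding Let_def SS cu cp sum using part1[OF j] by blast
  next
    fix k assume k: "1 \<le> k \<and> k < l"
    then have j: "Suc (k - 1) \<le> l - 1" by arith
    have st: "(ps - L.p (k - 1)) \<bullet> (L.S *v (ps - L.p (k - 1))) =
        (ps - L.p (Suc (k - 1))) \<bullet> (L.S *v (ps - L.p (Suc (k - 1)))) + (L.ze (Suc (k - 1)))\<^sup>2"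
      by (rule E.e_step[OF j])
    have nz: "L.ze (Suc (k - 1)) \<noteq> 0" by (rule E.ze_nz[OF j])
    have "(ps - L.p (Suc (k - 1))) \<bullet> (L.S *v (ps - L.p (Suc (k - 1)))) < (ps - L.p (k - 1)) \<bullet> (L.S *v (ps - L.p (k - 1)))"
      using st nz by simp
    moreover have "Suc (k - 1) = k + 1 - 1" using k by simp
    ultimately show "qnorm (transpose A ** matrix_inv M ** A + C) (ps - craig_p M A C N b (k + 1))
          < qnorm (transpose A ** matrix_inv M ** A + C) (ps - craig_p M A C N b k)"
      unfolding SS cp qnorm_def by simp
  qed
qed

end
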